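(* Let $K\ge2$ and $d\ge1$ be integers with $d=2$ or $K\le d+1$. Then no Softmax Code $\mathbf W\in\mathrm{OB}(d,K)$ has a rattler; i.e., for every Softmax Code $\mathbf W$ and every $k\in[K]$, $\operatorname{dist}(\mathbf w_k,\{\mathbf w_j\}_{j\ne k})=\min_{k'}\operatorname{dist}(\mathbf w_{k'},\{\mathbf w_j\}_{j\ne k'})$.
   Context: $\mathrm{OB}(d,K)$ is the set of real $d\times K$ matrices with unit-norm columns $\mathbf w_1,\dots,\mathbf w_K$. $\operatorname{dist}(\mathbf v,\mathcal W)=\inf\{\|\mathbf v-\mathbf w\|_2:\mathbf w\in\operatorname{conv}(\mathcal W)\}$; $\rho_{\text{one-vs-rest}}(\mathbf W)=\min_k\operatorname{dist}(\mathbf w_k,\{\mathbf w_j\}_{j\ne k})$. A Softmax Code is a maximizer of $\rho_{\text{one-vs-rest}}$ over $\mathrm{OB}(d,K)$. A rattler of $\mathbf W$ is an index $k$ with $\operatorname{dist}(\mathbf w_k,\{\mathbf w_j\}_{j\ne k})\ne\rho_{\text{one-vs-rest}}(\mathbf W)$. *)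

theory Defs
  imports "HOL-Analysis.Analysis"
begin

text \<open>A d x K matrix is represented by its K columns W 0, ..., W (K-1), each in real^'d
  (so d = CARD('d)). Columns indexed outside {..<K} are irrelevant.\<close>

definition OB :: "nat \<Rightarrow> (nat \<Rightarrow> real^'d) set" where
  "OB K = {W. \<forall>k<K. norm (W k) = 1}"

definition dist_hull :: "real^'d \<Rightarrow> (real^'d) set \<Rightarrow> real" where
  "dist_hull v S = Inf {norm (v - w) | w. w \<in> convex hull S}"

definition one_vs_rest_dist :: "nat \<Rightarrow> (nat \<Rightarrow> real^'d) \<Rightarrow> nat \<Rightarrow> real" where
  "one_vs_rest_dist K W k = dist_hull (W k) {W j | j. j < K \<and> j \<noteq> k}"

definition rho_one_vs_rest :: "nat \<Rightarrow> (nat \<Rightarrow> real^'d) \<Rightarrow> real" where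
  "rho_one_vs_rest K W = Min {one_vs_rest_dist K W k | k. k < K}"

definition softmax_code :: "nat \<Rightarrow> (nat \<Rightarrow> real^'d) \<Rightarrow> bool" where
  "softmax_code K W \<longleftrightarrow> W \<in> OB K \<and> (\<forall>W' \<in> (OB K :: (nat \<Rightarrow> real^'d) set). rho_one_vs_rest K W' \<le> rho_one_vs_rest K W)"

definition is_rattler :: "nat \<Rightarrow> (nat \<Rightarrow> real^'d) \<Rightarrow> nat \<Rightarrow> bool" where
  "is_rattler K W k \<longleftrightarrow> k < K \<and> one_vs_rest_dist K W k \<noteq> rho_one_vs_rest K W"

end

theory Submission
  imports Defs
begin

lemma dist_hull_le:
  assumes "x \<in> convex hull S"
  shows "dist_hull v S \<le> norm (v - x)"
  unfolding dist_hull_def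
  by (rule cInf_lower) (use assms in \<open>auto intro: bdd_belowI[where m=0]\<close>)

lemma dist_hull_ge:
  fixes w :: "real^'d"
  assumes "S \<noteq> {}" "\<And>s. s \<in> S \<Longrightarrow> inner s w \<le> c" "norm w = 1"
  shows "1 - c \<le> dist_hull w S"
  unfolding dist_hull_def
proof (rule cInf_greatest)
  show "{norm (w - x) |x. x \<in> convex hull S} \<noteq> {}" using assms(1) hull_subset by fastforce
next
  fix y assume "y \<in> {norm (w - x) |x. x \<in> convex hull S}"
  then obtain x where x: "x \<in> convex hull S" "y = norm (w - x)" by auto
  have "convex hull S \<subseteq> {x. inner x w \<le> c}"
    by (rule hull_minimal) (use assms(2) convex_halfspace_le[of w c] in \<open>auto simp: inner_commute\<close>)
  with x have "inner x w \<le> c" by auto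
  have "inner (w - x) w \<le> norm (w - x) * norm w" by (rule norm_cauchy_schwarz)
  moreover have "inner w w = 1" using assms(3) by (simp add: power2_norm_eq_inner[symmetric])
  ultimately show "1 - c \<le> y" using \<open>inner x w \<le> c\<close> x assms(3) by (simp add: inner_diff_left)
qed

lemma rho_le:
  assumes "k < K" shows "rho_one_vs_rest K W \<le> one_vs_rest_dist K W k"
  unfolding rho_one_vs_rest_def by (rule Min_le) (use assms in auto)

lemma rho_ge:
  assumes "1 \<le> K" "\<And>k. k < K \<Longrightarrow> c \<le> one_vs_rest_dist K W k"
  shows "c \<le> rho_one_vs_rest K W"
  unfolding rho_one_vs_rest_def using assms by (subst Min_ge_iff) (auto intro!: exI[of _ 0])

lemma rho_eq:
  assumes "1 \<le> K" "\<And>k. k < K \<Longrightarrow> one_vs_rest_dist K W k = c"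
  shows "rho_one_vs_rest K W = c"
  using rho_le[of 0 K W] rho_ge[of K c W] assms by force

lemma reduce:
  fixes W W0 :: "nat \<Rightarrow> real^'d"
  assumes "1 \<le> K" "softmax_code K W" "W0 \<in> OB K" "\<And>k. k < K \<Longrightarrow> r \<le> one_vs_rest_dist K W0 k"
    "(\<And>k. k < K \<Longrightarrow> r \<le> one_vs_rest_dist K W k) \<Longrightarrow> (\<And>k. k < K \<Longrightarrow> one_vs_rest_dist K W k \<le> r)"
  shows "\<forall>k<K. one_vs_rest_dist K W k = rho_one_vs_rest K W"
proof -
  have "rho_one_vs_rest K W0 \<le> rho_one_vs_rest K W" using assms(2,3) unfolding softmax_code_def by auto
  moreover have "r \<le> rho_one_vs_rest K W0" by (rule rho_ge) (use assms in auto)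
  ultimately have ge: "r \<le> one_vs_rest_dist K W k" if "k < K" for k using rho_le[OF that, of W] by linarith
  then have eq: "one_vs_rest_dist K W k = r" if "k < K" for k using assms(5) that by force
  then have "rho_one_vs_rest K W = r" using rho_eq assms(1) by blast
  then show ?thesis using eq by auto
qed

lemma simplex_upper:
  fixes W :: "nat \<Rightarrow> real^'d"
  assumes W: "W \<in> OB K" and K: "2 \<le> K" and r: "r = real K / (real K - 1)"
    and ge: "\<And>k. k < K \<Longrightarrow> r \<le> one_vs_rest_dist K W k"
  shows "\<And>k. k < K \<Longrightarrow> one_vs_rest_dist K W k \<le> r"
proof (rule ccontr)
  fix k0 assume k0: "k0 < K" "\<not> one_vs_rest_dist K W k0 \<le> r"
  define S where "S = (\<Sum>j<K. W j)"
  define a where "a = real K / (real K - 1)"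
  define b where "b = 1 / (real K - 1)"
  have K1: "real K - 1 > 0" using K by simp
  have unit: "inner (W k) (W k) = 1" if "k < K" for k
    using W that unfolding OB_def by (simp add: power2_norm_eq_inner[symmetric])
  define u where "u k = (\<Sum>j\<in>{..<K}-{k}. b *\<^sub>R W j)" for k
  have u_eq: "u k = b *\<^sub>R (S - W k)" if "k < K" for k
    unfolding u_def S_def using that by (simp add: scaleR_sum_right[symmetric] sum_diff1)
  have u_in: "u k \<in> convex hull {W j | j. j < K \<and> j \<noteq> k}" if "k < K" for k
    unfolding u_def
  proof (rule convex_sum)
    show "(\<Sum>i\<in>{..<K} - {k}. b) = 1" using that K1 by (simp add: b_def of_nat_diff)
    show "\<And>i. i \<in> {..<K} - {k} \<Longrightarrow> W i \<in> convex hull {W j |j. j < K \<and> j \<noteq> k}"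
      by (rule hull_inc) auto
  qed (auto simp: b_def K1 less_imp_le)
  have nsq: "norm (W k - u k)^2 = a^2 - 2*a*b*inner (W k) S + b^2 * inner S S" if "k < K" for k
  proof -
    have e: "W k - u k = a *\<^sub>R W k - b *\<^sub>R S"
    proof -
      have ab: "a = 1 + b" using K1 by (simp add: a_def b_def field_simps)
      show ?thesis using that by (simp add: u_eq ab algebra_simps)
    qed
    have "norm (W k - u k)^2 = inner (a *\<^sub>R W k - b *\<^sub>R S) (a *\<^sub>R W k - b *\<^sub>R S)"
      unfolding e by (rule power2_norm_eq_inner)
    also have "\<dots> = a^2 - 2*a*b*inner (W k) S + b^2 * inner S S" using unit[OF that]
      by (simp add: inner_diff_left inner_diff_right inner_commute power2_eq_square algebra_simps)
    finally show ?thesis .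
  qed
  have dle: "(one_vs_rest_dist K W k)^2 \<le> norm (W k - u k)^2" if "k < K" for k
  proof -
    have "one_vs_rest_dist K W k \<le> norm (W k - u k)"
      unfolding one_vs_rest_dist_def by (rule dist_hull_le) (rule u_in[OF that])
    moreover have "0 \<le> one_vs_rest_dist K W k" using ge[OF that] r K1 by (smt (verit) divide_nonneg_pos of_nat_0_le_iff)
    ultimately show ?thesis by (simp add: power_mono)
  qed
  have "(\<Sum>k<K. r^2) < (\<Sum>k<K. (one_vs_rest_dist K W k)^2)"
  proof (rule sum_strict_mono_ex1)
    show "\<forall>x\<in>{..<K}. r^2 \<le> (one_vs_rest_dist K W x)^2"
      using ge r K1 by (auto intro!: power_mono)
    have "r < one_vs_rest_dist K W k0" using k0 by simp
    moreover have "0 \<le> r" using r K1 by simp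
    ultimately show "\<exists>a\<in>{..<K}. r^2 < (one_vs_rest_dist K W a)^2" using k0(1)
      by (auto intro!: bexI[of _ k0] power_strict_mono)
  qed simp
  also have "\<dots> \<le> (\<Sum>k<K. norm (W k - u k)^2)" by (rule sum_mono) (simp add: dle)
  also have "\<dots> = (\<Sum>k<K. a^2 - 2*a*b*inner (W k) S + b^2 * inner S S)" by (rule sum.cong) (auto simp: nsq)
  also have "\<dots> = real K * a^2 - 2*a*b*inner S S + real K * b^2 * inner S S"
    by (simp add: sum.distrib sum_subtractf sum_distrib_left[symmetric] inner_sum_left[symmetric] S_def)
  also have "\<dots> = real K * a^2 - (2*a - real K * b) * b * inner S S" by (simp add: algebra_simps power2_eq_square)
  also have "\<dots> \<le> real K * a^2"
  proof -
    have "2*a - real K * b = real K * b" by (simp add: a_def b_def)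
    then have "0 \<le> (2*a - real K * b) * b * inner S S" using K1 by (simp add: b_def)
    then show ?thesis by simp
  qed
  finally show False using r a_def by simp
qed

lemma simplex_exists:
  assumes K: "2 \<le> K" "K \<le> CARD('d) + 1"
  shows "\<exists>W0::nat \<Rightarrow> real^'d. W0 \<in> OB K \<and> (\<forall>k<K. real K / (real K - 1) \<le> one_vs_rest_dist K W0 k)"
proof -
  define n where "n = K - 1"
  have n1: "1 \<le> n" and Kn: "K = Suc n" using K by (auto simp: n_def)
  have rn: "real n = real K - 1" using Kn by simp
  obtain f :: "nat \<Rightarrow> 'd" where f: "inj_on f {..<n}"
  proof -
    have "n \<le> CARD('d)" using K by (simp add: n_def)
    then show ?thesis using card_le_inj[of "{..<n}" "UNIV :: 'd set"] that by auto
  qed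
  define e where "e i = (axis (f i) (1::real) :: real^'d)" for i
  define s where "s = (\<Sum>i<n. e i)"
  have ee: "inner (e i) (e j) = (if i = j then 1 else 0)" if "i < n" "j < n" for i j
    using f that by (auto simp: e_def inner_axis_axis inj_on_def)
  have es: "inner (e j) s = 1" if "j < n" for j
  proof -
    have "inner (e j) s = (\<Sum>i<n. inner (e j) (e i))" by (simp add: s_def inner_sum_right)
    also have "\<dots> = (\<Sum>i<n. if j = i then 1 else 0)" by (rule sum.cong) (auto simp: ee that)
    also have "\<dots> = 1" using that by simp
    finally show ?thesis .
  qed
  have ss: "inner s s = real n"
  proof -
    have "inner s s = (\<Sum>i<n. inner (e i) s)" by (simp add: s_def inner_sum_left)
    also have "\<dots> = (\<Sum>i<n. 1)" by (rule sum.cong) (auto simp: es)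
    finally show ?thesis by simp
  qed
  have se: "inner s (e j) = 1" if "j < n" for j using es[OF that] by (simp add: inner_commute)
  define p where "p = sqrt (real n)"
  define q where "q = sqrt (real n + 1)"
  have p0: "p > 0" and p2: "p^2 = real n" using n1 by (auto simp: p_def)
  have q2: "q^2 = real n + 1" by (simp add: q_def)
  define a where "a = q / p"
  define b where "b = (1 - q) / (p * real n)"
  have A3: "a + b * real n = 1 / p" using n1 p0 by (simp add: a_def b_def field_simps)
  have A2: "2*a*b + b^2 * real n = - 1 / real n"
  proof -
    have "(a + b * real n)^2 = 1 / real n" using A3 p2 by (simp add: power_divide)
    moreover have "a^2 = (real n + 1) / real n" using p2 q2 by (simp add: a_def power_divide)
    ultimately have "2*a*b*real n + b^2 * real n^2 = -1" using n1
      by (simp add: power2_eq_square algebra_simps add_divide_distrib)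
    then show ?thesis using n1 by (simp add: field_simps power2_eq_square)
  qed
  have A1: "a^2 + 2*a*b + b^2 * real n = 1"
  proof -
    have "a^2 = (real n + 1) / real n" using p2 q2 by (simp add: a_def power_divide)
    then have "a^2 + 2*a*b + b^2 * real n = (real n + 1) / real n + (-1 / real n)"
      using A2 by (simp add: algebra_simps)
    also have "\<dots> = 1" using n1 by (simp add: field_simps)
    finally show ?thesis .
  qed
  define W0 where "W0 i = (if i < n then a *\<^sub>R e i + b *\<^sub>R s else (-1/p) *\<^sub>R s)" for i
  have G: "inner (W0 i) (W0 j) = (if i = j then 1 else -1 / real n)" if "i < K" "j < K" for i j
  proof (cases "i < n")
    case True
    note i = True
    show ?thesis
    proof (cases "j < n")
      case True
      have "inner (W0 i) (W0 j) = a*a*inner (e i) (e j) + a*b*inner (e i) s + b*a*inner s (e j) + b*b*inner s s"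
        using i True by (simp add: W0_def inner_add_left inner_add_right distrib_left)
      also have "\<dots> = a^2 * inner (e i) (e j) + 2*a*b + b^2 * real n"
        by (simp only: es[OF i] se[OF True] ss) (simp add: power2_eq_square)
      finally have "inner (W0 i) (W0 j) = a^2 * inner (e i) (e j) + 2*a*b + b^2 * real n" .
      then show ?thesis using A1 A2 i True by (auto simp: ee)
    next
      case False
      then have "j = n" using that Kn by simp
      have "inner (W0 i) (W0 j) = - (a + b * real n) / p"
        using i \<open>j = n\<close> p0 by (simp add: W0_def inner_add_left es ss field_simps)
      then show ?thesis using A3 p2 i \<open>j = n\<close> by (simp add: power2_eq_square)
    qed
  next
    case False
    then have "i = n" using that Kn by simp
    show ?thesis
    proof (cases "j < n")
      case True
      have "inner (W0 i) (W0 j) = - (a + b * real n) / p"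
        using True \<open>i = n\<close> p0 by (simp add: W0_def inner_add_right es se ss field_simps)
      then show ?thesis using A3 p2 True \<open>i = n\<close> by (simp add: power2_eq_square)
    next
      case False
      then have "j = n" using that Kn by simp
      have "inner (W0 i) (W0 j) = real n / p^2"
        using \<open>i = n\<close> \<open>j = n\<close> by (simp add: W0_def ss power2_eq_square)
      then show ?thesis using p2 n1 \<open>i = n\<close> \<open>j = n\<close> by simp
    qed
  qed
  have nrm: "norm (W0 i) = 1" if "i < K" for i
    using G[OF that that] by (simp add: norm_eq_sqrt_inner)
  have "W0 \<in> OB K" using nrm by (simp add: OB_def)
  moreover have "real K / (real K - 1) \<le> one_vs_rest_dist K W0 k" if k: "k < K" for k
  proof -
    have "1 - (-1 / real n) \<le> one_vs_rest_dist K W0 k"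
      unfolding one_vs_rest_dist_def
    proof (rule dist_hull_ge)
      define j where "j = (if k = 0 then 1 else 0::nat)"
      have "j < K" "j \<noteq> k" using K by (auto simp: j_def)
      then show "{W0 j |j. j < K \<and> j \<noteq> k} \<noteq> {}" by auto
      show "norm (W0 k) = 1" using nrm k .
      show "\<And>x. x \<in> {W0 j |j. j < K \<and> j \<noteq> k} \<Longrightarrow> inner x (W0 k) \<le> - 1 / real n"
        using G k by auto
    qed
    moreover have "1 - (-1 / real n) = real K / (real K - 1)" using n1 rn by (simp add: field_simps)
    ultimately show ?thesis by simp
  qed
  ultimately show ?thesis by blast
qed

lemma seg_bound:
  fixes u v :: "'a::real_inner"
  assumes u: "norm u = 1" and v: "norm v = 1" and uv: "inner u v = 0"
    and g: "0 \<le> g1" "0 \<le> g2" "g1 + g2 \<le> pi"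
  shows "\<exists>x \<in> closed_segment (cos g1 *\<^sub>R u - sin g1 *\<^sub>R v) (cos g2 *\<^sub>R u + sin g2 *\<^sub>R v).
           norm (u - x) \<le> 1 - cos ((g1+g2)/2)"
proof -
  define \<alpha> where "\<alpha> = (g1+g2)/2"
  have c1: "0 \<le> 1 - cos \<alpha>" by simp
  show ?thesis
  proof (cases "g1 = 0 \<or> g2 = 0")
    case True
    then show ?thesis
    proof
      assume "g1 = 0"
      then show ?thesis using c1 unfolding \<alpha>_def
        by (intro bexI[of _ "cos g1 *\<^sub>R u - sin g1 *\<^sub>R v"]) auto
    next
      assume "g2 = 0"
      then show ?thesis using c1 unfolding \<alpha>_def
        by (intro bexI[of _ "cos g2 *\<^sub>R u + sin g2 *\<^sub>R v"]) auto
    qed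
  next
    case False
    then have g1p: "0 < g1" "g1 < pi" and g2p: "0 < g2" "g2 < pi" using g by auto
    define s1 where "s1 = sin g1"
    define s2 where "s2 = sin g2"
    have s1p: "s1 > 0" using g1p by (simp add: s1_def sin_gt_zero)
    have s2p: "s2 > 0" using g2p by (simp add: s2_def sin_gt_zero)
    define \<mu> where "\<mu> = s1 / (s1 + s2)"
    have \<mu>: "0 \<le> \<mu>" "\<mu> \<le> 1" using s1p s2p by (auto simp: \<mu>_def)
    have one_mu: "1 - \<mu> = s2 / (s1 + s2)" using s1p s2p by (simp add: \<mu>_def field_simps)
    define X where "X = (s2 * cos g1 + s1 * cos g2) / (s1 + s2)"
    define x where "x = (1 - \<mu>) *\<^sub>R (cos g1 *\<^sub>R u - sin g1 *\<^sub>R v) + \<mu> *\<^sub>R (cos g2 *\<^sub>R u + sin g2 *\<^sub>R v)"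
    have xin: "x \<in> closed_segment (cos g1 *\<^sub>R u - sin g1 *\<^sub>R v) (cos g2 *\<^sub>R u + sin g2 *\<^sub>R v)"
      unfolding x_def closed_segment_def using \<mu> by auto
    have "x = ((1 - \<mu>) * cos g1 + \<mu> * cos g2) *\<^sub>R u + (\<mu> * s2 - (1 - \<mu>) * s1) *\<^sub>R v"
      unfolding x_def s1_def s2_def by (simp add: algebra_simps)
    also have "(1 - \<mu>) * cos g1 + \<mu> * cos g2 = X"
    proof -
      have ne: "s1 + s2 \<noteq> 0" using s1p s2p by simp
      show ?thesis by (simp only: one_mu) (simp add: X_def \<mu>_def ne add_divide_distrib mult.commute)
    qed
    also have "\<mu> * s2 - (1 - \<mu>) * s1 = 0"
      unfolding one_mu \<mu>_def using s1p s2p by (simp add: field_simps)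
    finally have xX: "x = X *\<^sub>R u" by simp
    have X1: "X \<le> 1"
    proof -
      have "s2 * cos g1 \<le> s2" using s2p by (simp add: mult_left_le)
      moreover have "s1 * cos g2 \<le> s1" using s1p by (simp add: mult_left_le)
      ultimately have "s2 * cos g1 + s1 * cos g2 \<le> s1 + s2" by linarith
      then show ?thesis using s1p s2p by (simp add: X_def divide_le_eq)
    qed
    have X2: "cos \<alpha> \<le> X"
    proof -
      define \<delta> where "\<delta> = (g2 - g1)/2"
      have num: "s2 * cos g1 + s1 * cos g2 = 2 * sin \<alpha> * cos \<alpha>"
      proof -
        have "s2 * cos g1 + s1 * cos g2 = sin (g1 + g2)" by (simp add: s1_def s2_def sin_add)
        also have "g1 + g2 = 2 * \<alpha>" by (simp add: \<alpha>_def)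
        finally show ?thesis by (simp add: sin_double)
      qed
      have den: "s1 + s2 = 2 * sin \<alpha> * cos \<delta>"
        using sin_plus_sin[of g2 g1] by (simp add: s1_def s2_def \<alpha>_def \<delta>_def add.commute)
      have sa: "0 \<le> sin \<alpha>" using g by (intro sin_ge_zero) (auto simp: \<alpha>_def)
      have ca: "0 \<le> cos \<alpha>" using g by (intro cos_ge_zero) (auto simp: \<alpha>_def)
      have "cos \<alpha> * (s1 + s2) \<le> s2 * cos g1 + s1 * cos g2"
      proof -
        have "cos \<alpha> * (s1 + s2) = (2 * sin \<alpha> * cos \<alpha>) * cos \<delta>" by (simp add: den)
        also have "\<dots> \<le> (2 * sin \<alpha> * cos \<alpha>) * 1"
          by (rule mult_left_mono) (use sa ca in auto)
        finally show ?thesis by (simp add: num)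
      qed
      then show ?thesis using s1p s2p by (simp add: X_def le_divide_eq)
    qed
    have "u - x = (1 - X) *\<^sub>R u" by (simp add: xX scaleR_diff_left)
    then have "norm (u - x) = \<bar>1 - X\<bar>" using u by simp
    also have "\<dots> \<le> 1 - cos \<alpha>" using X1 X2 by simp
    finally show ?thesis using xin unfolding \<alpha>_def by blast
  qed
qed

definition Pv :: "'d \<Rightarrow> 'd \<Rightarrow> real \<Rightarrow> real^'d" where
  "Pv e1 e2 t = cos t *\<^sub>R axis e1 1 + sin t *\<^sub>R axis e2 1"
definition Qv :: "'d \<Rightarrow> 'd \<Rightarrow> real \<Rightarrow> real^'d" where
  "Qv e1 e2 t = (- sin t) *\<^sub>R axis e1 1 + cos t *\<^sub>R axis e2 1"

lemma Pv_inner: "e1 \<noteq> e2 \<Longrightarrow> inner (Pv e1 e2 t) (Pv e1 e2 s) = cos (t - s)"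
  by (simp add: Pv_def inner_add_left inner_add_right inner_axis_axis cos_diff)

lemma Pv_norm: "e1 \<noteq> e2 \<Longrightarrow> norm (Pv e1 e2 t) = 1"
  using Pv_inner[of e1 e2 t t] by (simp add: norm_eq_sqrt_inner)

lemma Qv_norm: "e1 \<noteq> e2 \<Longrightarrow> norm (Qv e1 e2 t) = 1"
proof -
  assume "e1 \<noteq> e2"
  then have "inner (Qv e1 e2 t) (Qv e1 e2 t) = 1"
    by (simp add: Qv_def inner_add_left inner_add_right inner_diff_left inner_diff_right inner_axis_axis power2_eq_square)
  then show ?thesis by (simp add: norm_eq_sqrt_inner)
qed

lemma PQ_inner: "e1 \<noteq> e2 \<Longrightarrow> inner (Pv e1 e2 t) (Qv e1 e2 t) = 0"
  by (simp add: Pv_def Qv_def inner_add_left inner_add_right inner_diff_left inner_diff_right inner_axis_axis)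

lemma Pv_minus: "Pv e1 e2 (t - g) = cos g *\<^sub>R Pv e1 e2 t - sin g *\<^sub>R Qv e1 e2 t"
  by (simp add: Pv_def Qv_def cos_diff sin_diff algebra_simps)

lemma Pv_plus: "Pv e1 e2 (t + g) = cos g *\<^sub>R Pv e1 e2 t + sin g *\<^sub>R Qv e1 e2 t"
  by (simp add: Pv_def Qv_def cos_add sin_add algebra_simps)

lemma Pv_2pi: "Pv e1 e2 (t + 2*pi) = Pv e1 e2 t" "Pv e1 e2 (t - 2*pi) = Pv e1 e2 t"
proof -
  show "Pv e1 e2 (t + 2*pi) = Pv e1 e2 t" by (simp add: Pv_def)
  have "cos (t - 2*pi) = cos t" using cos_periodic[of "t - 2*pi"] by simp
  moreover have "sin (t - 2*pi) = sin t" using sin_periodic[of "t - 2*pi"] by simp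
  ultimately show "Pv e1 e2 (t - 2*pi) = Pv e1 e2 t" by (simp add: Pv_def)
qed

lemma Pv_surj:
  fixes x :: "real^'d"
  assumes "e1 \<noteq> e2" "UNIV = {e1, e2}" "norm x = 1"
  shows "\<exists>t. 0 \<le> t \<and> t < 2*pi \<and> x = Pv e1 e2 t"
proof -
  have x: "x = (x$e1) *\<^sub>R axis e1 1 + (x$e2) *\<^sub>R axis e2 1"
  proof (subst vec_eq_iff, intro allI)
    fix i :: 'd
    have "i = e1 \<or> i = e2" using assms(2) by blast
    then show "x $ i = ((x$e1) *\<^sub>R axis e1 1 + (x$e2) *\<^sub>R axis e2 1) $ i"
      using assms(1) by (auto simp: axis_def)
  qed
  have "inner x x = (x$e1)^2 + (x$e2)^2"
    unfolding inner_vec_def assms(2) using assms(1) by (simp add: power2_eq_square)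
  moreover have "inner x x = 1" using assms(3) by (simp add: power2_norm_eq_inner[symmetric])
  ultimately obtain t where "0 \<le> t" "t < 2*pi" "x$e1 = cos t" "x$e2 = sin t"
    using sincos_total_2pi[of "x$e1" "x$e2"] by metis
  then show ?thesis using x by (auto simp: Pv_def)
qed

lemma cos_poly_bound:
  fixes j k K :: nat
  assumes "j < K" "k < K" "j \<noteq> k"
  shows "cos (2*pi*j/K - 2*pi*k/K) \<le> cos (2*pi/K)"
proof -
  have K2: "2 \<le> K" using assms by linarith
  have main: "cos (2*pi*m/K) \<le> cos (2*pi/K)" if m: "1 \<le> m" "m < K" for m :: nat
  proof -
    have Kp: "real K > 0" using K2 by simp
    have c0: "0 \<le> 2*pi/K" "2*pi/K \<le> pi" using K2 by (auto simp: field_simps)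
    show ?thesis
    proof (cases "2*pi*m/K \<le> pi")
      case True
      have "2*pi/K \<le> 2*pi*m/K" using m Kp by (simp add: divide_right_mono)
      then show ?thesis using True c0 by (subst cos_mono_le_eq) auto
    next
      case False
      have e: "cos (2*pi*m/K) = cos (2*pi - 2*pi*m/K)" by simp
      have "2*pi - 2*pi*m/K = 2*pi*(K - m)/K" using m Kp by (simp add: field_simps of_nat_diff)
      moreover have "2*pi/K \<le> 2*pi*(K - m)/K" using m Kp by (simp add: divide_right_mono)
      ultimately show ?thesis using False c0 unfolding e by (subst cos_mono_le_eq) auto
    qed
  qed
  show ?thesis
  proof (cases "k < j")
    case True
    have "2*pi*j/K - 2*pi*k/K = 2*pi*(j-k)/K" using True by (simp add: of_nat_diff diff_divide_distrib algebra_simps)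
    then show ?thesis using main[of "j-k"] True assms by auto
  next
    case False
    then have "j < k" using assms by simp
    have "2*pi*j/K - 2*pi*k/K = - (2*pi*(k-j)/K)" using \<open>j < k\<close> by (simp add: of_nat_diff diff_divide_distrib algebra_simps)
    then show ?thesis using main[of "k-j"] \<open>j < k\<close> assms by (simp del: cos_minus) (simp)
  qed
qed

lemma card2_obtain:
  assumes "CARD('d) = 2"
  obtains e1 e2 :: 'd where "e1 \<noteq> e2" "UNIV = {e1, e2}"
  using assms by (auto simp: card_2_iff)

lemma polygon_exists:
  assumes "CARD('d) = 2" "2 \<le> K"
  shows "\<exists>W0::nat \<Rightarrow> real^'d. W0 \<in> OB K \<and> (\<forall>k<K. 1 - cos (2*pi/K) \<le> one_vs_rest_dist K W0 k)"
proof -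
  obtain e1 e2 :: 'd where e: "e1 \<noteq> e2" "UNIV = {e1, e2}" using card2_obtain[OF assms(1)] by blast
  define W0 where "W0 (k::nat) = Pv e1 e2 (2*pi*k/K)" for k
  have "W0 \<in> OB K" using e by (simp add: OB_def W0_def Pv_norm)
  moreover have "1 - cos (2*pi/K) \<le> one_vs_rest_dist K W0 k" if k: "k < K" for k
    unfolding one_vs_rest_dist_def
  proof (rule dist_hull_ge)
    define j where "j = (if k = 0 then 1 else 0::nat)"
    have "j < K" "j \<noteq> k" using assms(2) by (auto simp: j_def)
    then show "{W0 j |j. j < K \<and> j \<noteq> k} \<noteq> {}" by auto
    show "norm (W0 k) = 1" using e by (simp add: W0_def Pv_norm)
    show "\<And>x. x \<in> {W0 j |j. j < K \<and> j \<noteq> k} \<Longrightarrow> inner x (W0 k) \<le> cos (2*pi/K)"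
      using e k cos_poly_bound[of _ K k] by (auto simp: W0_def Pv_inner)
  qed
  ultimately show ?thesis by blast
qed

lemma two_dim_upper:
  fixes W :: "nat \<Rightarrow> real^'d"
  assumes card: "CARD('d) = 2" and K4: "4 \<le> K" and W: "W \<in> OB K"
    and ge: "\<And>k. k < K \<Longrightarrow> 1 - cos (2*pi/K) \<le> one_vs_rest_dist K W k"
  shows "\<And>k. k < K \<Longrightarrow> one_vs_rest_dist K W k \<le> 1 - cos (2*pi/K)"
proof -
  obtain e1 e2 :: 'd where e: "e1 \<noteq> e2" "UNIV = {e1, e2}" using card2_obtain[OF card] by blast
  define r where "r = 1 - cos (2*pi/K)"
  have Kp: "real K > 0" using K4 by simp
  have c0: "0 < 2*pi/K" "2*pi/K \<le> pi/2" using K4 Kp by (auto simp: field_simps)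
  have rpos: "0 < r"
  proof -
    have "cos (2*pi/K) < cos 0" using c0 by (subst cos_mono_less_eq) auto
    then show ?thesis by (simp add: r_def)
  qed
  have unit: "norm (W k) = 1" if "k < K" for k using W that by (simp add: OB_def)
  have distinct: "W j \<noteq> W k" if "j < K" "k < K" "j \<noteq> k" for j k
  proof
    assume eq: "W j = W k"
    have "W j \<in> convex hull {W j | j. j < K \<and> j \<noteq> k}" by (rule hull_inc) (use that in auto)
    then have "one_vs_rest_dist K W k \<le> norm (W k - W j)"
      unfolding one_vs_rest_dist_def by (rule dist_hull_le)
    then show False using eq ge[OF that(2)] rpos r_def by simp
  qed
  define \<theta> where "\<theta> k = (SOME t. 0 \<le> t \<and> t < 2*pi \<and> W k = Pv e1 e2 t)" for k
  have \<theta>: "0 \<le> \<theta> k \<and> \<theta> k < 2*pi \<and> W k = Pv e1 e2 (\<theta> k)" if "k < K" for k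
    unfolding \<theta>_def by (rule someI_ex) (rule Pv_surj[OF e unit[OF that]])
  have inj: "inj_on \<theta> {..<K}"
  proof (rule inj_onI)
    fix j k assume "j \<in> {..<K}" "k \<in> {..<K}" "\<theta> j = \<theta> k"
    then show "j = k" using \<theta>[of j] \<theta>[of k] distinct[of j k] by auto
  qed
  define L where "L = sorted_list_of_set (\<theta> ` {..<K})"
  have lenL: "length L = K" using inj by (simp add: L_def card_image)
  have setL: "set L = \<theta> ` {..<K}" by (simp add: L_def)
  have strict: "sorted_wrt (<) L" by (simp add: L_def)
  have distL: "distinct L" by (simp add: L_def)
  have less: "L!i < L!j" if "i < j" "j < K" for i j
    using strict that lenL by (auto simp: sorted_wrt_iff_nth_less)
  have Lth: "\<exists>k<K. L!i = \<theta> k" if "i < K" for i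
  proof -
    have "L!i \<in> set L" using that lenL by simp
    then show ?thesis using setL by auto
  qed
  have Lrange: "0 \<le> L!i \<and> L!i < 2*pi" if "i < K" for i using Lth[OF that] \<theta> by auto
  have thL: "\<exists>i<K. L!i = \<theta> k" if "k < K" for k
  proof -
    have "\<theta> k \<in> set L" using setL that by auto
    then show ?thesis using lenL by (auto simp: in_set_conv_nth)
  qed
  obtain n where Kn: "K = Suc n" using K4 by (cases K) auto
  have n3: "3 \<le> n" using K4 Kn by simp
  define g where "g i = (if i < n then L!(Suc i) - L!i else L!0 + 2*pi - L!n)" for i
  have g0: "0 \<le> g i" if "i < K" for i
  proof (cases "i < n")
    case True then show ?thesis using less[of i "Suc i"] Kn by (simp add: g_def)
  next
    case False then show ?thesis using Lrange[of 0] Lrange[of n] Kn by (simp add: g_def)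
  qed
  have sumg: "(\<Sum>i<K. g i) = 2*pi"
  proof -
    have "(\<Sum>i<n. g i) = (\<Sum>i<n. L!(Suc i) - L!i)" by (rule sum.cong) (auto simp: g_def)
    also have "\<dots> = L!n - L!0" by (rule sum_lessThan_telescope)
    finally show ?thesis using Kn by (simp add: g_def)
  qed
  define pr where "pr i = (if i = 0 then n else i - 1)" for i
  define nx where "nx i = (if i < n then Suc i else 0)" for i
  define t where "t i = g (pr i) + g i" for i
  have sumt: "(\<Sum>i<K. t i) = 4*pi"
  proof -
    have "(\<Sum>i<K. g (pr i)) = g n + (\<Sum>i<n. g i)"
      unfolding Kn by (subst sum.lessThan_Suc_shift) (simp add: pr_def)
    also have "\<dots> = (\<Sum>i<K. g i)" using Kn by simp
    finally have "(\<Sum>i<K. g (pr i)) = 2*pi" using sumg by simp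
    then show ?thesis using sumg by (simp add: t_def sum.distrib)
  qed
  have key: "one_vs_rest_dist K W k \<le> 1 - cos (t i / 2)"
    if i: "i < K" and k: "k < K" and ik: "L!i = \<theta> k" and tpi: "t i \<le> pi" for i k
  proof -
    have pri: "pr i < K" "pr i \<noteq> i" using i Kn n3 by (auto simp: pr_def)
    have nxi: "nx i < K" "nx i \<noteq> i" using i Kn n3 by (auto simp: nx_def)
    obtain j1 where j1: "j1 < K" "L!(pr i) = \<theta> j1" using Lth[OF pri(1)] by blast
    obtain j2 where j2: "j2 < K" "L!(nx i) = \<theta> j2" using Lth[OF nxi(1)] by blast
    have "L!(pr i) \<noteq> L!i" using distL pri i lenL by (simp add: nth_eq_iff_index_eq)
    then have j1k: "j1 \<noteq> k" using j1 ik by auto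
    have "L!(nx i) \<noteq> L!i" using distL nxi i lenL by (simp add: nth_eq_iff_index_eq)
    then have j2k: "j2 \<noteq> k" using j2 ik by auto
    have W1: "W j1 = Pv e1 e2 (\<theta> k - g (pr i))"
    proof (cases "i = 0")
      case True
      then have "\<theta> k - g (pr i) = L!n - 2*pi" using ik by (simp add: pr_def g_def)
      then show ?thesis using \<theta>[OF j1(1)] j1 True by (simp add: pr_def Pv_2pi)
    next
      case False
      moreover have "i - 1 < n" using False i Kn by simp
      ultimately have "\<theta> k - g (pr i) = L!(i - 1)" using ik by (simp add: pr_def g_def)
      then show ?thesis using \<theta>[OF j1(1)] j1 False by (simp add: pr_def)
    qed
    have W2: "W j2 = Pv e1 e2 (\<theta> k + g i)"
    proof (cases "i < n")
      case True
      then have "\<theta> k + g i = L!(Suc i)" using ik by (simp add: g_def)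
      then show ?thesis using \<theta>[OF j2(1)] j2 True by (simp add: nx_def)
    next
      case False
      then have "i = n" using i Kn by simp
      then have "\<theta> k + g i = L!0 + 2*pi" using ik by (simp add: g_def)
      then show ?thesis using \<theta>[OF j2(1)] j2 \<open>i = n\<close> by (simp add: nx_def Pv_2pi)
    qed
    obtain x where x: "x \<in> closed_segment (cos (g (pr i)) *\<^sub>R Pv e1 e2 (\<theta> k) - sin (g (pr i)) *\<^sub>R Qv e1 e2 (\<theta> k))
                          (cos (g i) *\<^sub>R Pv e1 e2 (\<theta> k) + sin (g i) *\<^sub>R Qv e1 e2 (\<theta> k))"
      and xn: "norm (Pv e1 e2 (\<theta> k) - x) \<le> 1 - cos ((g (pr i) + g i)/2)"
      using seg_bound[OF Pv_norm[OF e(1)] Qv_norm[OF e(1)] PQ_inner[OF e(1)] g0[OF pri(1)] g0[OF i], of "\<theta> k"]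
        tpi by (auto simp: t_def)
    have "x \<in> closed_segment (W j1) (W j2)" using x by (simp add: W1 W2 Pv_minus Pv_plus)
    also have "\<dots> = convex hull {W j1, W j2}" by (rule segment_convex_hull)
    also have "\<dots> \<subseteq> convex hull {W j | j. j < K \<and> j \<noteq> k}"
      by (rule hull_mono) (use j1 j2 j1k j2k in auto)
    finally have "one_vs_rest_dist K W k \<le> norm (W k - x)"
      unfolding one_vs_rest_dist_def by (rule dist_hull_le)
    also have "\<dots> \<le> 1 - cos (t i / 2)" using xn \<theta>[OF k] by (simp add: t_def)
    finally show ?thesis .
  qed
  have tge: "4*pi/K \<le> t i" if i: "i < K" for i
  proof (rule ccontr)
    assume "\<not> 4*pi/K \<le> t i"
    then have lt: "t i < 4*pi/K" by simp
    have "4*pi/K = 2 * (2*pi/K)" by simp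
    then have tpi: "t i \<le> pi" using lt c0 by linarith
    obtain k where k: "k < K" "L!i = \<theta> k" using Lth[OF i] by blast
    have tnn: "0 \<le> t i" using g0 i Kn by (simp add: t_def pr_def add_nonneg_nonneg)
    have "cos (2*pi/K) < cos (t i / 2)" using lt tnn c0 by (subst cos_mono_less_eq) auto
    then show False using key[OF i k(1) k(2) tpi] ge[OF k(1)] by simp
  qed
  have teq: "t i = 4*pi/K" if i: "i < K" for i
  proof -
    have "(\<Sum>i<K. t i - 4*pi/K) = 4*pi - K * (4*pi/K)" using sumt by (simp add: sum_subtractf)
    also have "\<dots> = 0" using Kp by simp
    finally have "\<forall>i\<in>{..<K}. t i - 4*pi/K = 0"
      using sum_nonneg_eq_0_iff[of "{..<K}" "\<lambda>i. t i - 4*pi/K"] tge by auto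
    then show ?thesis using i by simp
  qed
  fix k assume k: "k < K"
  obtain i where i: "i < K" "L!i = \<theta> k" using thL[OF k] by blast
  have "4*pi/K = 2 * (2*pi/K)" by simp
  then have tpi: "t i \<le> pi" using teq[OF i(1)] c0 by linarith
  have "t i / 2 = 2*pi/K" using teq[OF i(1)] by simp
  then show "one_vs_rest_dist K W k \<le> 1 - cos (2*pi/K)" using key[OF i(1) k i(2) tpi] by simp
qed

theorem mainTheorem7:
  fixes K :: nat and W :: "nat \<Rightarrow> real^'d"
  assumes "K \<ge> 2"
    and "CARD('d) = 2 \<or> K \<le> CARD('d) + 1"
    and "softmax_code K W"
  shows "\<forall>k<K. one_vs_rest_dist K W k = rho_one_vs_rest K W"
proof -
  have K1: "1 \<le> K" using assms(1) by simp
  have W: "W \<in> OB K" using assms(3) by (simp add: softmax_code_def)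
  show ?thesis
  proof (cases "K \<le> CARD('d) + 1")
    case True
    obtain W0 :: "nat \<Rightarrow> real^'d" where W0: "W0 \<in> OB K" "\<forall>k<K. real K / (real K - 1) \<le> one_vs_rest_dist K W0 k"
      using simplex_exists[OF assms(1) True] by blast
    show ?thesis
      by (rule reduce[OF K1 assms(3) W0(1), of "real K / (real K - 1)"])
         (use W0(2) simplex_upper[OF W assms(1) refl] in auto)
  next
    case False
    then have card: "CARD('d) = 2" using assms(2) by simp
    then have K4: "4 \<le> K" using False by simp
    obtain W0 :: "nat \<Rightarrow> real^'d" where W0: "W0 \<in> OB K" "\<forall>k<K. 1 - cos (2*pi/K) \<le> one_vs_rest_dist K W0 k"
      using polygon_exists[OF card assms(1)] by blast
    show ?thesis
      by (rule reduce[OF K1 assms(3) W0(1), of "1 - cos (2*pi/K)"])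
         (use W0(2) two_dim_upper[OF card K4 W] in auto)
  qed
qed

end
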